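(* Let $\lambda_n>0$ for $n\ge1$ and $0<\nu\le1$, and let $p^{\nu}(n,t)$ be the solution of $$\partial_t^{\nu} p^{\nu}(n,t)=-\lambda_np^{\nu}(n,t)+\lambda_{n-1}p^{\nu}(n-1,t),\qquad n\geq 1,$$ with $p^{\nu}(0,t)=0$, $p^{\nu}(1,0)=1$ and $p^{\nu}(n,0)=0$ for $n\ge2$ (the fractional pure birth process). Then $$p^{\nu}(n,t)=(-1)^{n-1}\frac{\lambda_1}{\lambda_n}\sum_{k=n-1}^{\infty}\frac{(-1)^k t^{k\nu}}{\Gamma(k\nu+1)}\sum_{\Lambda^k_n}\prod_{j=1}^n\lambda_j^{k_j},\qquad n\geq1,$$ where $\Lambda^k_n=\{(k_1,\ldots,k_n):\ \sum_{j=1}^nk_j=k,\ k_1\in\mathbb{N}_0,\ k_j\in\mathbb{N}_0\setminus\{0\} \text{ for } 2\leq j\leq n\}$.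
   Context: $\mathbb{N}_0$ denotes the set of nonnegative integers. For $0<\nu<1$, $\partial_t^{\nu}f(t)=\frac{1}{\Gamma(1-\nu)}\int_0^t (t-s)^{-\nu}f'(s)\,\mathrm{d}s$ is the Caputo derivative, and $\partial_t^{1}f=f'$. *)

theory Defs
  imports "HOL-Analysis.Analysis"
begin

definition caputo :: "real \<Rightarrow> (real \<Rightarrow> real) \<Rightarrow> real \<Rightarrow> real" where
  "caputo nu f t =
     (if nu = 1 then deriv f t
      else (1 / Gamma (1 - nu)) * integral {0..t} (\<lambda>s. (t - s) powr (- nu) * deriv f s))"

text \<open>The index set Lambda^k_n: tuples (k_1,...,k_n) encoded as functions on {1..n}
  (zero outside), summing to k, with k_j >= 1 for 2 <= j <= n.\<close>
definition Lambda_set :: "nat \<Rightarrow> nat \<Rightarrow> (nat \<Rightarrow> nat) set" where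
  "Lambda_set k n = {kk. (\<forall>j. j \<notin> {1..n} \<longrightarrow> kk j = 0) \<and> (\<Sum>j=1..n. kk j) = k
                        \<and> (\<forall>j\<in>{2..n}. 1 \<le> kk j)}"

end

theory Submission
  imports Defs
begin


lemma bm_lebesgue_on:
  fixes f :: "real \<Rightarrow> real"
  assumes "f \<in> borel_measurable borel"
  shows "f \<in> borel_measurable (lebesgue_on S)"
  by (simp add: assms measurable_completion measurable_restrict_space1)

lemma powr_has_integral0:
  fixes a c :: real
  assumes "a > 0" "c \<ge> 0"
  shows "((\<lambda>x. x powr (a-1)) has_integral (c powr a / a)) {0..c}"
proof -
  have "((\<lambda>x. x powr (a-1)) has_integral (c powr a / a - 0 powr a / a)) {0..c}"
  proof (rule fundamental_theorem_of_calculus_interior)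
    show "continuous_on {0..c} (\<lambda>x. x powr a / a)"
      using assms by (intro continuous_intros continuous_on_powr') auto
    fix x assume "x \<in> {0<..<c}"
    then show "((\<lambda>x. x powr a / a) has_vector_derivative x powr (a - 1)) (at x)"
      using assms by (auto intro!: derivative_eq_intros simp: has_real_derivative_iff_has_vector_derivative[symmetric])
  qed (use assms in auto)
  then show ?thesis by simp
qed

lemma powr_has_integral1:
  fixes b c :: real
  assumes "b > 0" "c \<ge> 0"
  shows "((\<lambda>x. (c - x) powr (b-1)) has_integral (c powr b / b)) {0..c}"
proof -
  have "((\<lambda>x. (c - x) powr (b-1)) has_integral ((- ((c - c) powr b / b)) - (- ((c - 0) powr b / b)))) {0..c}"
  proof (rule fundamental_theorem_of_calculus_interior)
    show "continuous_on {0..c} (\<lambda>x. - ((c - x) powr b / b))"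
      using assms by (intro continuous_intros continuous_on_powr') auto
    fix x assume "x \<in> {0<..<c}"
    then show "((\<lambda>x. - ((c - x) powr b / b)) has_vector_derivative (c - x) powr (b - 1)) (at x)"
      using assms by (auto intro!: derivative_eq_intros simp: has_real_derivative_iff_has_vector_derivative[symmetric])
  qed (use assms in auto)
  then show ?thesis by simp
qed

lemma powr_half_bound:
  fixes y c :: real
  assumes "1/2 \<le> y" "y \<le> 1"
  shows "y powr c \<le> max 1 (2 powr (-c))"
proof (cases "c \<ge> 0")
  case True
  then have "y powr c \<le> 1 powr c" using assms by (intro powr_mono2) auto
  then show ?thesis by simp
next
  case False
  then have "y powr c \<le> (1/2) powr c" using assms by (intro powr_mono2') auto
  also have "(1/2::real) powr c = 2 powr (-c)" by (simp add: powr_divide powr_minus_divide)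
  finally show ?thesis by simp
qed

definition fB :: "real \<Rightarrow> real \<Rightarrow> real \<Rightarrow> real" where
  "fB a b x = x powr (a-1) * (1-x) powr (b-1)"

lemma fB_nonneg: "fB a b x \<ge> 0"
  by (simp add: fB_def)

lemma fB_abs_integrable:
  assumes "a > 0" "b > 0"
  shows "fB a b absolutely_integrable_on {0..1}"
proof (rule measurable_bounded_by_integrable_imp_absolutely_integrable)
  show "fB a b \<in> borel_measurable (lebesgue_on {0..1})"
    unfolding fB_def by (intro bm_lebesgue_on) measurable
  define Ka where "Ka = max 1 (2 powr (-(a-1)))"
  define Kb where "Kb = max 1 (2 powr (-(b-1)))"
  show "(\<lambda>x. Kb * x powr (a-1) + Ka * (1-x) powr (b-1)) integrable_on {0..1}"
  proof -
    have "(\<lambda>x. x powr (a-1)) integrable_on {0..1}"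
      using powr_has_integral0[OF assms(1), of 1] by (auto intro: has_integral_integrable)
    moreover have "(\<lambda>x. (1-x) powr (b-1)) integrable_on {0..1}"
      using powr_has_integral1[OF assms(2), of 1] by (auto intro: has_integral_integrable)
    ultimately show ?thesis by (intro integrable_add integrable_on_mult_right)
  qed
  fix x :: real assume x: "x \<in> {0..1}"
  show "norm (fB a b x) \<le> Kb * x powr (a-1) + Ka * (1-x) powr (b-1)"
  proof (cases "x \<le> 1/2")
    case True
    have "(1-x) powr (b-1) \<le> Kb" unfolding Kb_def using True x by (intro powr_half_bound) auto
    then have "fB a b x \<le> x powr (a-1) * Kb" unfolding fB_def by (intro mult_left_mono) auto
    moreover have "0 \<le> Ka * (1-x) powr (b-1)" by (simp add: Ka_def)
    ultimately show ?thesis using fB_nonneg[of a b x] by (simp add: mult.commute)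
  next
    case False
    have "x powr (a-1) \<le> Ka" unfolding Ka_def using False x by (intro powr_half_bound) auto
    then have "fB a b x \<le> Ka * (1-x) powr (b-1)" unfolding fB_def by (intro mult_right_mono) auto
    moreover have "0 \<le> Kb * x powr (a-1)" by (simp add: Kb_def)
    ultimately show ?thesis using fB_nonneg[of a b x] by simp
  qed
qed auto

lemma fB_integrable:
  assumes "a > 0" "b > 0"
  shows "fB a b integrable_on {0..1}"
  using fB_abs_integrable[OF assms] absolutely_integrable_on_def by blast

definition JB :: "real \<Rightarrow> real \<Rightarrow> real" where
  "JB a b = integral {0..1} (fB a b)"

lemma JB_split:
  assumes "a > 0" "b > 0"
  shows "JB a b = JB (a+1) b + JB a (b+1)"
proof -
  have eq: "fB a b x = fB (a+1) b x + fB a (b+1) x" if "x \<in> {0..1}" for x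
  proof -
    have h1: "x powr a = x * x powr (a-1)" using that assms
      by (cases "x = 0") (auto simp: powr_mult_base)
    have "(1-x) powr b = (1-x) * (1-x) powr (b-1)" using that assms
      using powr_mult_base[of "1-x" "b-1"] by (cases "x = 1") auto
    then have h2: "(1-x) powr b + x * (1-x) powr (b-1) = (1-x) powr (b-1)"
      by (simp add: algebra_simps)
    have "fB (a+1) b x + fB a (b+1) x = x powr (a-1) * ((1-x) powr b + x * (1-x) powr (b-1))"
      unfolding fB_def using h1 by (simp add: algebra_simps)
    then show ?thesis using h2 by (simp add: fB_def)
  qed
  have "JB a b = integral {0..1} (\<lambda>x. fB (a+1) b x + fB a (b+1) x)"
    unfolding JB_def by (rule integral_cong) (use eq in auto)
  also have "\<dots> = JB (a+1) b + JB a (b+1)" unfolding JB_def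
    using assms by (intro integral_add fB_integrable) auto
  finally show ?thesis .
qed

lemma JB_parts:
  assumes "a > 0" "b > 0"
  shows "b * JB (a+1) b = a * JB a (b+1)"
proof -
  have "((\<lambda>x. a * fB a (b+1) x - b * fB (a+1) b x) has_integral
          ((1 powr a * (1-1) powr b) - (0 powr a * (1-0) powr b))) {0..1}"
  proof (rule fundamental_theorem_of_calculus_interior)
    show "continuous_on {0..1} (\<lambda>x::real. x powr a * (1-x) powr b)"
      using assms by (intro continuous_intros continuous_on_powr') auto
    fix x :: real assume x: "x \<in> {0<..<1}"
    have "((\<lambda>x. x powr a * (1-x) powr b) has_real_derivative
          (a * (x powr (a-1)) * (1-x) powr b + x powr a * (b * (1-x) powr (b-1) * (-1)))) (at x)"
      using x by (auto intro!: derivative_eq_intros)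
    moreover have "a * (x powr (a-1)) * (1-x) powr b + x powr a * (b * (1-x) powr (b-1) * (-1))
        = a * fB a (b+1) x - b * fB (a+1) b x" unfolding fB_def by simp
    ultimately show "((\<lambda>x. x powr a * (1-x) powr b) has_vector_derivative
          (a * fB a (b+1) x - b * fB (a+1) b x)) (at x)"
      by (simp add: has_real_derivative_iff_has_vector_derivative)
  qed auto
  then have "((\<lambda>x. a * fB a (b+1) x - b * fB (a+1) b x) has_integral 0) {0..1}"
    using assms by simp
  then have "integral {0..1} (\<lambda>x. a * fB a (b+1) x - b * fB (a+1) b x) = 0"
    by (rule integral_unique)
  moreover have "integral {0..1} (\<lambda>x. a * fB a (b+1) x - b * fB (a+1) b x)
      = a * JB a (b+1) - b * JB (a+1) b" unfolding JB_def
    using assms by (subst integral_diff) (auto intro!: integrable_cmul fB_integrable)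
  ultimately show ?thesis by simp
qed

lemma JB_rec:
  assumes "a > 0" "b > 0"
  shows "JB (a+1) b = a / (a+b) * JB a b"
proof -
  have "JB a b = JB (a+1) b + b / a * JB (a+1) b"
    using JB_split[OF assms] JB_parts[OF assms] assms by (simp add: field_simps)
  then have "JB a b = (a+b)/a * JB (a+1) b" using assms by (simp add: field_simps)
  then show ?thesis using assms by (simp add: field_simps)
qed

lemma JB_1:
  assumes "b > 0"
  shows "JB 1 b = 1 / b"
proof -
  have "((\<lambda>x. fB 1 b x) has_integral ((- ((1 - 1) powr b / b)) - (- ((1 - 0) powr b / b)))) {0..1}"
  proof (rule fundamental_theorem_of_calculus_interior)
    show "continuous_on {0..1} (\<lambda>x::real. - ((1 - x) powr b / b))"
      using assms by (intro continuous_intros continuous_on_powr') auto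
    fix x :: real assume x: "x \<in> {0<..<1}"
    have "((\<lambda>x. - ((1 - x) powr b / b)) has_real_derivative (1 - x) powr (b - 1)) (at x)"
      using x assms by (auto intro!: derivative_eq_intros)
    moreover have "fB 1 b x = (1 - x) powr (b - 1)" using x by (simp add: fB_def)
    ultimately show "((\<lambda>x. - ((1 - x) powr b / b)) has_vector_derivative fB 1 b x) (at x)"
      by (simp add: has_real_derivative_iff_has_vector_derivative)
  qed auto
  then show ?thesis using assms unfolding JB_def by (simp add: integral_unique)
qed

lemma powr_quarter_bound:
  fixes x c :: real
  assumes "1/4 \<le> x" "x \<le> 3/4"
  shows "x powr c \<ge> min ((1/4) powr c) ((3/4) powr c)"
proof (cases "c \<ge> 0")
  case True
  then have "(1/4) powr c \<le> x powr c" using assms by (intro powr_mono2) auto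
  then show ?thesis by simp
next
  case False
  then have "(3/4) powr c \<le> x powr c" using assms by (intro powr_mono2') auto
  then show ?thesis by simp
qed

lemma JB_pos:
  assumes "a > 0" "b > 0"
  shows "JB a b > 0"
proof -
  define ma where "ma = min ((1/4::real) powr (a-1)) ((3/4) powr (a-1))"
  define mb where "mb = min ((1/4::real) powr (b-1)) ((3/4) powr (b-1))"
  have ma: "ma > 0" and mb: "mb > 0" by (auto simp: ma_def mb_def)
  have int: "fB a b integrable_on {0..1}" using fB_integrable[OF assms] .
  have int2: "fB a b integrable_on {1/4..3/4}"
    by (rule integrable_subinterval_real[OF int]) auto
  have "integral {1/4..3/4::real} (\<lambda>x. ma * mb) \<le> integral {1/4..3/4} (fB a b)"
  proof (rule integral_le)
    fix x :: real assume x: "x \<in> {1/4..3/4}"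
    have "ma \<le> x powr (a-1)" unfolding ma_def using x by (intro powr_quarter_bound) auto
    moreover have "mb \<le> (1-x) powr (b-1)" unfolding mb_def using x by (intro powr_quarter_bound) auto
    ultimately show "ma * mb \<le> fB a b x" unfolding fB_def using ma mb
      by (intro mult_mono) auto
  qed (use int2 in auto)
  also have "\<dots> \<le> JB a b" unfolding JB_def
    by (rule integral_subset_le) (use int int2 fB_nonneg in auto)
  finally have "integral {1/4..3/4::real} (\<lambda>x. ma * mb) \<le> JB a b" .
  moreover have "integral {1/4..3/4::real} (\<lambda>x. ma * mb) = ma * mb / 2" by simp
  ultimately show ?thesis using mult_pos_pos[OF ma mb] by linarith
qed

lemma JB_logconvex:
  assumes a1: "a1 > 0" and a2: "a2 > 0" and b: "b > 0" and t: "0 < t" "t < 1"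
  shows "JB ((1-t)*a1 + t*a2) b \<le> JB a1 b powr (1-t) * JB a2 b powr t"
proof -
  define a where "a = (1-t)*a1 + t*a2"
  have a: "a > 0" unfolding a_def using a1 a2 t by (intro add_pos_pos mult_pos_pos) auto
  define J1 where "J1 = JB a1 b"
  define J2 where "J2 = JB a2 b"
  have J1: "J1 > 0" and J2: "J2 > 0" unfolding J1_def J2_def using JB_pos a1 a2 b by auto
  define P where "P = J1 powr (1-t) * J2 powr t"
  have P: "P > 0" unfolding P_def using J1 J2 by simp
  have le: "(1/P) * fB a b x \<le> ((1-t)/J1) * fB a1 b x + (t/J2) * fB a2 b x" if x: "x \<in> {0..1}" for x
  proof (cases "x = 0 \<or> x = 1")
    case True
    then have "fB a b x = 0" by (auto simp: fB_def)
    then show ?thesis using t J1 J2 fB_nonneg[of a1 b x] fB_nonneg[of a2 b x] by simp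
  next
    case False
    with x have x0: "0 < x" "x < 1" by auto
    have e1: "fB a1 b x powr (1-t) = x powr ((a1-1)*(1-t)) * (1-x) powr ((b-1)*(1-t))"
      unfolding fB_def using x0 by (simp add: powr_mult powr_powr)
    have e2: "fB a2 b x powr t = x powr ((a2-1)*t) * (1-x) powr ((b-1)*t)"
      unfolding fB_def using x0 by (simp add: powr_mult powr_powr)
    have "fB a b x = x powr ((a1-1)*(1-t) + (a2-1)*t) * (1-x) powr ((b-1)*(1-t) + (b-1)*t)"
      unfolding fB_def a_def by (simp add: algebra_simps)
    also have "\<dots> = fB a1 b x powr (1-t) * fB a2 b x powr t"
      unfolding e1 e2 by (simp add: powr_add)
    finally have fa: "fB a b x = fB a1 b x powr (1-t) * fB a2 b x powr t" .
    have pos1: "fB a1 b x / J1 > 0" and pos2: "fB a2 b x / J2 > 0"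
      using x0 J1 J2 by (auto simp: fB_def)
    have "(fB a1 b x / J1) powr (1-t) * (fB a2 b x / J2) powr t
        \<le> (1-t) * (fB a1 b x / J1) + t * (fB a2 b x / J2)"
      by (rule Youngs_inequality_0) (use t pos1 pos2 in auto)
    moreover have "(fB a1 b x / J1) powr (1-t) * (fB a2 b x / J2) powr t = (1/P) * fB a b x"
      unfolding fa P_def using J1 J2 x0 by (simp add: powr_divide fB_def)
    ultimately show ?thesis by simp
  qed
  have "integral {0..1} (\<lambda>x. (1/P) * fB a b x) \<le>
        integral {0..1} (\<lambda>x. ((1-t)/J1) * fB a1 b x + (t/J2) * fB a2 b x)"
  proof (rule integral_le)
    show "(\<lambda>x. (1/P) * fB a b x) integrable_on {0..1}"
      using a b by (intro integrable_on_mult_right fB_integrable)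
    show "(\<lambda>x. ((1-t)/J1) * fB a1 b x + (t/J2) * fB a2 b x) integrable_on {0..1}"
      using a1 a2 b by (intro integrable_add integrable_on_mult_right fB_integrable)
  qed (use le in auto)
  also have "\<dots> = ((1-t)/J1) * J1 + (t/J2) * J2"
  proof -
    have i1: "(\<lambda>x. ((1-t)/J1) * fB a1 b x) integrable_on {0..1}"
      using a1 b by (intro integrable_on_mult_right fB_integrable)
    have i2: "(\<lambda>x. (t/J2) * fB a2 b x) integrable_on {0..1}"
      using a2 b by (intro integrable_on_mult_right fB_integrable)
    show ?thesis by (subst integral_add[OF i1 i2]) (simp add: JB_def J1_def J2_def)
  qed
  also have "\<dots> = 1" using J1 J2 by simp
  finally have "(1/P) * JB a b \<le> 1" unfolding JB_def by simp
  then have "JB a b \<le> P" using P by (simp add: field_simps)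
  then show ?thesis unfolding a_def P_def J1_def J2_def .
qed

lemma Gamma_plus1_real: "(x::real) > 0 \<Longrightarrow> Gamma (x + 1) = x * Gamma x"
  by (rule Gamma_plus1) (auto elim!: nonpos_Ints_cases)

lemma JB_eq_Beta:
  assumes a: "a > 0" and b: "b > 0"
  shows "JB a b = Beta a b"
proof -
  define G where "G x = JB x b * Gamma (x + b) / Gamma b" for x
  have Gb: "Gamma b > 0" using b by (rule Gamma_real_pos)
  then have Gb': "Gamma b \<noteq> 0" by simp
  have "G a = Gamma a"
  proof (rule Gamma_pos_real_unique[of G])
    show "G 1 = 1" unfolding G_def using JB_1[OF b] Gamma_plus1_real[OF b] Gb' b
      by (simp add: add.commute)
    fix x :: real assume x: "x > 0"
    have r: "JB (x+1) b * (x + b) = x * JB x b" using JB_rec[OF x b] x b by (simp add: field_simps)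
    have g: "Gamma (x + 1 + b) = (x+b) * Gamma (x+b)" using Gamma_plus1_real[of "x+b"] x b
      by (simp add: add_ac)
    have "JB (x+1) b * ((x+b) * Gamma (x+b)) = x * (JB x b * Gamma (x+b))"
      using r by (metis mult.assoc)
    then show "G (x + 1) = x * G x" unfolding G_def g by simp
  next
    fix x :: real assume x: "x > 0"
    show "G x > 0" unfolding G_def using JB_pos[OF x b] Gb Gamma_real_pos[of "x+b"] x b by simp
  next
    show "convex_on {0<..} (ln \<circ> G)"
    proof (rule convex_onI)
      fix t x y :: real assume t: "t > 0" "t < 1" and x: "x \<in> {0<..}" and y: "y \<in> {0<..}"
      have x0: "x > 0" and y0: "y > 0" using x y by auto
      have lnG: "ln (G z) = ln (JB z b) + ln (Gamma (z + b)) - ln (Gamma b)" if "z > 0" for z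
      proof -
        have "Gamma (z+b) > 0" using that b by (intro Gamma_real_pos) auto
        moreover have "JB z b > 0" using that b by (intro JB_pos)
        ultimately show ?thesis unfolding G_def using Gb by (simp add: ln_mult ln_div)
      qed
      define w where "w = (1-t)*x + t*y"
      have z: "w > 0" unfolding w_def using t x0 y0 by (intro add_pos_pos mult_pos_pos) auto
      have "ln (JB w b) \<le> ln (JB x b powr (1-t) * JB y b powr t)"
        unfolding w_def using JB_logconvex[OF x0 y0 b t] JB_pos[OF z b] by (simp add: w_def)
      also have "\<dots> = (1-t) * ln (JB x b) + t * ln (JB y b)"
        using JB_pos[OF x0 b] JB_pos[OF y0 b] by (simp add: ln_mult ln_powr)
      finally have 1: "ln (JB w b) \<le> (1-t) * ln (JB x b) + t * ln (JB y b)" .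
      have "(ln \<circ> Gamma) ((1-t) *\<^sub>R (x+b) + t *\<^sub>R (y+b)) \<le> (1-t) * (ln \<circ> Gamma) (x+b) + t * (ln \<circ> Gamma) (y+b)"
        by (rule convex_onD[OF log_convex_Gamma_real]) (use t x0 y0 b in auto)
      moreover have "(1-t) *\<^sub>R (x+b) + t *\<^sub>R (y+b) = w + b" unfolding w_def by (simp add: algebra_simps)
      ultimately have 2: "ln (Gamma (w + b)) \<le> (1-t) * ln (Gamma (x+b)) + t * ln (Gamma (y+b))"
        by simp
      have 3: "(1-t) * ln (G x) + t * ln (G y) = ((1-t) * ln (JB x b) + t * ln (JB y b))
           + ((1-t) * ln (Gamma (x+b)) + t * ln (Gamma (y+b))) - ln (Gamma b)"
        unfolding lnG[OF x0] lnG[OF y0] by (simp add: algebra_simps)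
      have "(1 - t) *\<^sub>R x + t *\<^sub>R y = w" unfolding w_def by simp
      then show "(ln \<circ> G) ((1 - t) *\<^sub>R x + t *\<^sub>R y) \<le> (1 - t) * (ln \<circ> G) x + t * (ln \<circ> G) y"
        using 1 2 3 lnG[OF z] by simp
    qed auto
  qed (rule a)
  moreover have "Gamma (a+b) > 0" using a b by (intro Gamma_real_pos) auto
  ultimately show ?thesis unfolding G_def Beta_def using Gb
    by (simp add: field_simps)
qed

lemma Beta_has_integral:
  assumes "a > 0" "b > 0"
  shows "(fB a b has_integral Beta a b) {0..1}"
  using fB_integrable[OF assms] JB_eq_Beta[OF assms] unfolding JB_def
  by (metis has_integral_integral)

lemma image_div_inv_Icc:
  fixes t :: real assumes t: "t > 0"
  shows "(\<lambda>x. x * t) ` {0..1} = {0..t}"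
proof
  show "(\<lambda>x. x * t) ` {0..1} \<subseteq> {0..t}" using t by (auto simp: mult_le_cancel_right1)
  show "{0..t} \<subseteq> (\<lambda>x. x * t) ` {0..1}"
  proof
    fix s assume s: "s \<in> {0..t}"
    have "s = (s/t) * t" using t by simp
    moreover have "s/t \<in> {0..1}" using s t by auto
    ultimately show "s \<in> (\<lambda>x. x * t) ` {0..1}" by (rule image_eqI)
  qed
qed

lemma Beta_scaled:
  fixes a b t :: real
  assumes a: "a > 0" and b: "b > 0" and t: "t > 0"
  shows "((\<lambda>s. s powr (a-1) * (t-s) powr (b-1)) has_integral t powr (a+b-1) * Beta a b) {0..t}"
proof -
  have "((\<lambda>x. fB a b ((1/t) * x)) has_integral (1 / \<bar>1/t\<bar>) *\<^sub>R Beta a b) ((\<lambda>x. x / (1/t)) ` {0..1})"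
    by (rule has_integral_stretch_real[OF Beta_has_integral[OF a b]]) (use t in auto)
  then have h: "((\<lambda>x. fB a b (x / t)) has_integral t * Beta a b) {0..t}"
    using t by (simp add: image_div_inv_Icc)
  have eq: "fB a b (s / t) = t powr (2 - a - b) * (s powr (a-1) * (t-s) powr (b-1))"
    if s: "s \<in> {0..t}" for s
  proof -
    have "fB a b (s/t) = (s powr (a-1) / t powr (a-1)) * ((t-s) powr (b-1) / t powr (b-1))"
    proof -
      have "1 - s/t = (t-s)/t" using t by (simp add: field_simps)
      then show ?thesis unfolding fB_def using s t by (simp add: powr_divide)
    qed
    also have "\<dots> = (s powr (a-1) * (t-s) powr (b-1)) / (t powr (a-1) * t powr (b-1))" by simp
    also have "t powr (a-1) * t powr (b-1) = t powr (a+b-2)" by (simp add: powr_add[symmetric])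
    also have "1 / t powr (a+b-2) = t powr (2-a-b)" using t
      by (simp add: powr_minus_divide[symmetric] algebra_simps)
    then have "(s powr (a-1) * (t-s) powr (b-1)) / t powr (a+b-2) = t powr (2-a-b) * (s powr (a-1) * (t-s) powr (b-1))"
      by (metis divide_inverse inverse_eq_divide mult.commute)
    finally show ?thesis .
  qed
  have "((\<lambda>s. t powr (2 - a - b) * (s powr (a-1) * (t-s) powr (b-1))) has_integral t * Beta a b) {0..t}"
    by (rule has_integral_eq[OF _ h]) (use eq in auto)
  then have "((\<lambda>s. t powr (a + b - 2) * (t powr (2 - a - b) * (s powr (a-1) * (t-s) powr (b-1)))) has_integral
      t powr (a + b - 2) * (t * Beta a b)) {0..t}"
    by (rule has_integral_mult_right)
  moreover have "t powr (a + b - 2) * t powr (2 - a - b) = 1"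
    using t by (simp add: powr_add[symmetric])
  moreover have "t powr (a + b - 2) * t = t powr (a + b - 1)"
    using t powr_mult_base[of t "a+b-2"] by (simp add: algebra_simps)
  ultimately show ?thesis by (simp add: mult.assoc[symmetric])
qed



lemma pow_fact_le_exp:
  fixes x :: real assumes "x \<ge> 0"
  shows "x ^ n / fact n \<le> exp x"
proof -
  have s: "(\<lambda>n. x ^ n / fact n) sums exp x"
    using exp_converges[of x] by (simp add: divide_inverse mult.commute scaleR_conv_of_real)
  have "sum (\<lambda>n. x ^ n / fact n) {n} \<le> suminf (\<lambda>n. x ^ n / fact n)"
    by (rule sum_le_suminf) (use s assms in \<open>auto simp: sums_iff\<close>)
  then show ?thesis using s by (simp add: sums_iff)
qed

lemma Gamma_ge_fact_floor:
  fixes x :: real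
  assumes "x \<ge> 1"
  shows "Gamma (x + 1) \<ge> fact (nat \<lfloor>x\<rfloor>)"
proof -
  define m where "m = nat \<lfloor>x\<rfloor>"
  have m: "real m \<le> x" "x < real m + 1" "m \<ge> 1" using assms unfolding m_def by linarith+
  have "fact m = Gamma (real m + 1)" using Gamma_fact[where 'a=real, of m] by (simp add: add.commute)
  also have "\<dots> \<le> Gamma (x + 1)"
  proof (cases "real m = x")
    case True then show ?thesis by simp
  next
    case False
    then have "real m + 1 < x + 1" using m by simp
    moreover have "real m + 1 \<ge> 3/2" using m by simp
    ultimately show ?thesis using Gamma_real_strict_mono by (simp add: less_imp_le)
  qed
  finally show ?thesis unfolding m_def .
qed

lemma mittag_summable:
  fixes nu y :: real
  assumes nu: "nu > 0" and y: "y \<ge> 0"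
  shows "summable (\<lambda>k. y ^ k / Gamma (real k * nu + 1))"
proof -
  define Y where "Y = max 1 y"
  define Z where "Z = Y powr (1/nu)"
  define W where "W = (2::real) powr (1/nu)"
  have Y: "Y \<ge> 1" unfolding Y_def by simp
  have Z: "Z \<ge> 1" unfolding Z_def using Y nu by (simp add: ge_one_powr_ge_zero)
  have W: "W \<ge> 1" unfolding W_def using nu by (simp add: ge_one_powr_ge_zero)
  have Wnu: "W powr nu = 2" unfolding W_def using nu by (simp add: powr_powr)
  define N where "N = nat \<lceil>1/nu\<rceil>"
  show ?thesis
  proof (rule summable_comparison_test'[where N = N])
    show "summable (\<lambda>k. (Z * exp (Z * W) * W) * (1/2) ^ k)"
      by (intro summable_mult complete_algebra_summable_geometric) simp
    fix k :: nat assume k: "k \<ge> N"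
    have kn: "real k * nu \<ge> 1"
    proof -
      have "real k \<ge> 1/nu" using k unfolding N_def by linarith
      then show ?thesis using nu by (simp add: field_simps)
    qed
    define m where "m = nat \<lfloor>real k * nu\<rfloor>"
    have m: "real m \<le> real k * nu" "real k * nu < real m + 1" using kn unfolding m_def by linarith+
    have G: "Gamma (real k * nu + 1) \<ge> fact m" unfolding m_def by (rule Gamma_ge_fact_floor[OF kn])
    have Gpos: "Gamma (real k * nu + 1) > 0" using nu by (intro Gamma_real_pos add_nonneg_pos mult_nonneg_nonneg) auto
    have "y ^ k \<le> Y ^ k" unfolding Y_def using y by (intro power_mono) auto
    also have "Y ^ k = Z powr (real k * nu)"
      unfolding Z_def using Y nu by (simp add: powr_powr powr_realpow)
    also have "\<dots> \<le> Z powr (real m + 1)" using Z m by (intro powr_mono) auto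
    also have "\<dots> = Z * Z ^ m" using Z by (simp add: powr_add powr_realpow)
    finally have yk: "y ^ k \<le> Z * Z ^ m" .
    have "Z ^ m / fact m = ((Z * W) ^ m / fact m) * (1 / W) ^ m"
      using W by (simp add: power_mult_distrib power_divide)
    also have "\<dots> \<le> exp (Z * W) * (1 / W) ^ m"
      using Z W by (intro mult_right_mono pow_fact_le_exp) auto
    also have "(1 / W) ^ m = W powr (- real m)"
      using W by (simp add: powr_minus powr_realpow divide_inverse power_inverse)
    also have "\<dots> \<le> W powr (1 - real k * nu)" using W m by (intro powr_mono) auto
    also have "\<dots> = W * (1/2) ^ k"
    proof -
      have "W powr (real k * nu) = (W powr nu) powr real k" by (simp add: powr_powr mult.commute)
      also have "\<dots> = 2 ^ k" using Wnu by (simp add: powr_realpow)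
      finally have "W powr (real k * nu) = 2 ^ k" .
      then show ?thesis using W by (simp add: powr_diff power_divide)
    qed
    finally have zm: "Z ^ m / fact m \<le> exp (Z * W) * (W * (1/2) ^ k)"
      by (simp add: mult_left_mono)
    have "norm (y ^ k / Gamma (real k * nu + 1)) = y ^ k / Gamma (real k * nu + 1)"
      using y Gpos by simp
    also have "\<dots> \<le> Z * Z ^ m / fact m"
      using yk G Gpos y Z by (intro frac_le) auto
    also have "\<dots> = Z * (Z ^ m / fact m)" by simp
    also have "\<dots> \<le> Z * (exp (Z * W) * (W * (1/2) ^ k))"
      using zm Z by (intro mult_left_mono) auto
    finally show "norm (y ^ k / Gamma (real k * nu + 1)) \<le> (Z * exp (Z * W) * W) * (1/2) ^ k"
      by (simp add: mult_ac)
  qed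
qed



definition csum :: "(nat \<Rightarrow> real) \<Rightarrow> nat \<Rightarrow> nat \<Rightarrow> real" where
  "csum lam n k = (\<Sum>kk\<in>Lambda_set k n. \<Prod>j=1..n. lam j ^ kk j)"

lemma Lambda_finite: "finite (Lambda_set k n)"
proof (rule finite_subset)
  show "Lambda_set k n \<subseteq> {f. \<forall>x. (x \<in> {1..n} \<longrightarrow> f x \<in> {0..k}) \<and> (x \<notin> {1..n} \<longrightarrow> f x = 0)}"
  proof safe
    fix f x assume f: "f \<in> Lambda_set k n" and x: "x \<in> {1..n}"
    have "f x \<le> (\<Sum>j=1..n. f j)" using x by (intro member_le_sum) auto
    then show "f x \<in> {0..k}" using f by (auto simp: Lambda_set_def)
  next
    fix f x assume "f \<in> Lambda_set k n" "x \<notin> {1..n}"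
    then show "f x = 0" by (auto simp: Lambda_set_def)
  qed
qed (rule finite_set_of_finite_funs; simp)

lemma Lambda_empty:
  assumes "n \<ge> 1" "k < n - 1"
  shows "Lambda_set k n = {}"
proof (rule ccontr)
  assume "Lambda_set k n \<noteq> {}"
  then obtain f where f: "f \<in> Lambda_set k n" by blast
  have "(\<Sum>j=2..n. (1::nat)) \<le> (\<Sum>j=2..n. f j)"
    using f by (intro sum_mono) (auto simp: Lambda_set_def)
  also have "\<dots> \<le> (\<Sum>j=1..n. f j)" by (intro sum_mono2) auto
  also have "\<dots> = k" using f by (simp add: Lambda_set_def)
  finally show False using assms by simp
qed

lemma Lambda_1: "Lambda_set k 1 = {(\<lambda>j. if j = 1 then k else 0)}"
  by (auto simp: Lambda_set_def)

lemma csum_1: "csum lam 1 k = lam 1 ^ k"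
  unfolding csum_def Lambda_1 by simp

lemma csum_0: "n \<ge> 2 \<Longrightarrow> csum lam n 0 = 0"
  unfolding csum_def using Lambda_empty[of n 0] by simp

lemma csum_zero: "n \<ge> 1 \<Longrightarrow> k < n - 1 \<Longrightarrow> csum lam n k = 0"
  unfolding csum_def using Lambda_empty[of n k] by simp

lemma Lambda_Suc_decomp:
  assumes n: "n \<ge> 1"
  shows "Lambda_set (Suc k) (Suc n) =
     (\<lambda>kk. kk(Suc n := kk (Suc n) + 1)) ` Lambda_set k (Suc n) \<union>
     (\<lambda>kk. kk(Suc n := 1)) ` Lambda_set k n"
proof (intro equalityI subsetI)
  have split: "(\<Sum>j=1..Suc n. g j) = (\<Sum>j=1..n. g j) + g (Suc n)" for g :: "nat \<Rightarrow> nat"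
    by simp
  have cong: "(\<Sum>j=1..n. (g(Suc n := c)) j) = (\<Sum>j=1..n. g j)" for g :: "nat \<Rightarrow> nat" and c
    by (intro sum.cong) auto
  fix f assume f: "f \<in> Lambda_set (Suc k) (Suc n)"
  have fz: "\<And>j. j \<notin> {1..Suc n} \<Longrightarrow> f j = 0" and fs: "(\<Sum>j=1..Suc n. f j) = Suc k"
    and f1: "\<And>j. j \<in> {2..Suc n} \<Longrightarrow> 1 \<le> f j" using f unfolding Lambda_set_def by auto
  have fn: "f (Suc n) \<ge> 1" using f1[of "Suc n"] n by auto
  have fs': "(\<Sum>j=1..n. f j) + f (Suc n) = Suc k" using fs split[of f] by simp
  show "f \<in> (\<lambda>kk. kk(Suc n := kk (Suc n) + 1)) ` Lambda_set k (Suc n) \<union>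
     (\<lambda>kk. kk(Suc n := 1)) ` Lambda_set k n"
  proof (cases "f (Suc n) \<ge> 2")
    case True
    define g where "g = f(Suc n := f (Suc n) - 1)"
    have "g \<in> Lambda_set k (Suc n)" unfolding Lambda_set_def mem_Collect_eq
    proof (intro conjI allI impI ballI)
      fix j assume "j \<notin> {1..Suc n}" then show "g j = 0" using fz unfolding g_def by auto
    next
      have "(\<Sum>j=1..Suc n. g j) = (\<Sum>j=1..n. f j) + (f (Suc n) - 1)"
        unfolding split g_def cong by simp
      then show "(\<Sum>j=1..Suc n. g j) = k" using fs' True by simp
    next
      fix j assume "j \<in> {2..Suc n}" then show "1 \<le> g j" using f1 True unfolding g_def by auto
    qed
    moreover have "f = g(Suc n := g (Suc n) + 1)" unfolding g_def using True by auto
    ultimately show ?thesis by blast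
  next
    case False
    then have f1n: "f (Suc n) = 1" using fn by simp
    define g where "g = f(Suc n := 0)"
    have "g \<in> Lambda_set k n" unfolding Lambda_set_def mem_Collect_eq
    proof (intro conjI allI impI ballI)
      fix j assume "j \<notin> {1..n}" then show "g j = 0" using fz unfolding g_def by auto
    next
      show "(\<Sum>j=1..n. g j) = k" unfolding g_def cong using fs' f1n by simp
    next
      fix j assume "j \<in> {2..n}" then show "1 \<le> g j" using f1 unfolding g_def by auto
    qed
    moreover have "f = g(Suc n := 1)" unfolding g_def using f1n by auto
    ultimately show ?thesis by blast
  qed
next
  have split: "(\<Sum>j=1..Suc n. g j) = (\<Sum>j=1..n. g j) + g (Suc n)" for g :: "nat \<Rightarrow> nat"
    by simp
  have cong: "(\<Sum>j=1..n. (g(Suc n := c)) j) = (\<Sum>j=1..n. g j)" for g :: "nat \<Rightarrow> nat" and c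
    by (intro sum.cong) auto
  fix f assume "f \<in> (\<lambda>kk. kk(Suc n := kk (Suc n) + 1)) ` Lambda_set k (Suc n) \<union>
     (\<lambda>kk. kk(Suc n := 1)) ` Lambda_set k n"
  then consider g where "g \<in> Lambda_set k (Suc n)" "f = g(Suc n := g (Suc n) + 1)"
    | g where "g \<in> Lambda_set k n" "f = g(Suc n := 1)" by blast
  then show "f \<in> Lambda_set (Suc k) (Suc n)"
  proof cases
    case 1
    have gz: "\<And>j. j \<notin> {1..Suc n} \<Longrightarrow> g j = 0" and gs: "(\<Sum>j=1..Suc n. g j) = k"
      and g1: "\<And>j. j \<in> {2..Suc n} \<Longrightarrow> 1 \<le> g j" using 1(1) unfolding Lambda_set_def by auto
    show ?thesis unfolding Lambda_set_def mem_Collect_eq 1(2)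
    proof (intro conjI allI impI ballI)
      fix j assume "j \<notin> {1..Suc n}" then show "(g(Suc n := g (Suc n) + 1)) j = 0" using gz by auto
    next
      show "(\<Sum>j=1..Suc n. (g(Suc n := g (Suc n) + 1)) j) = Suc k"
        unfolding split cong using gs split[of g] by simp
    next
      fix j assume "j \<in> {2..Suc n}" then show "1 \<le> (g(Suc n := g (Suc n) + 1)) j" using g1 by auto
    qed
  next
    case 2
    have gz: "\<And>j. j \<notin> {1..n} \<Longrightarrow> g j = 0" and gs: "(\<Sum>j=1..n. g j) = k"
      and g1: "\<And>j. j \<in> {2..n} \<Longrightarrow> 1 \<le> g j" using 2(1) unfolding Lambda_set_def by auto
    show ?thesis unfolding Lambda_set_def mem_Collect_eq 2(2)
    proof (intro conjI allI impI ballI)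
      fix j assume "j \<notin> {1..Suc n}" then show "(g(Suc n := 1)) j = 0" using gz by auto
    next
      show "(\<Sum>j=1..Suc n. (g(Suc n := 1)) j) = Suc k"
        unfolding split cong using gs by simp
    next
      fix j assume "j \<in> {2..Suc n}" then show "1 \<le> (g(Suc n := 1)) j" using g1 by (cases "j = Suc n") auto
    qed
  qed
qed

lemma csum_Suc:
  assumes n: "n \<ge> 1"
  shows "csum lam (Suc n) (Suc k) = lam (Suc n) * (csum lam (Suc n) k + csum lam n k)"
proof -
  let ?A = "(\<lambda>kk. kk(Suc n := kk (Suc n) + 1)) ` Lambda_set k (Suc n)"
  let ?B = "(\<lambda>kk. kk(Suc n := 1)) ` Lambda_set k n"
  let ?P = "\<lambda>kk. \<Prod>j=1..Suc n. lam j ^ kk j"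
  have dis: "?A \<inter> ?B = {}"
  proof (safe)
    fix g h assume g: "g \<in> Lambda_set k (Suc n)" and "g(Suc n := g (Suc n) + 1) = h(Suc n := 1)"
    then have "g (Suc n) + 1 = 1" by (metis fun_upd_same)
    moreover have "g (Suc n) \<ge> 1" using g n by (auto simp: Lambda_set_def)
    ultimately show "g(Suc n := g (Suc n) + 1) \<in> {}" by simp
  qed
  have injA: "inj_on (\<lambda>kk. kk(Suc n := kk (Suc n) + 1)) (Lambda_set k (Suc n))"
  proof (rule inj_onI)
    fix g h :: "nat \<Rightarrow> nat" assume e: "g(Suc n := g (Suc n) + 1) = h(Suc n := h (Suc n) + 1)"
    show "g = h"
    proof (rule ext)
      fix x show "g x = h x"
      proof (cases "x = Suc n")
        case True
        then show ?thesis using fun_cong[OF e, of "Suc n"] by simp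
      next
        case False
        then show ?thesis using fun_cong[OF e, of x] by simp
      qed
    qed
  qed
  have injB: "inj_on (\<lambda>kk. kk(Suc n := 1)) (Lambda_set k n)"
  proof (rule inj_onI)
    fix g h :: "nat \<Rightarrow> nat" assume g: "g \<in> Lambda_set k n" and h: "h \<in> Lambda_set k n"
      and e: "g(Suc n := 1) = h(Suc n := 1)"
    have "g (Suc n) = 0" "h (Suc n) = 0" using g h by (auto simp: Lambda_set_def)
    then show "g = h"
    proof (intro ext)
      fix x show "g x = h x" using fun_cong[OF e, of x] \<open>g (Suc n) = 0\<close> \<open>h (Suc n) = 0\<close>
        by (cases "x = Suc n") auto
    qed
  qed
  have PA: "?P (g(Suc n := g (Suc n) + 1)) = lam (Suc n) * ?P g" for g
  proof -
    have "(\<Prod>j=1..n. lam j ^ (g(Suc n := g (Suc n) + 1)) j) = (\<Prod>j=1..n. lam j ^ g j)"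
      by (intro prod.cong) auto
    moreover have "?P (g(Suc n := g (Suc n) + 1)) = (\<Prod>j=1..n. lam j ^ (g(Suc n := g (Suc n) + 1)) j)
        * lam (Suc n) ^ (g (Suc n) + 1)" by simp
    moreover have "?P g = (\<Prod>j=1..n. lam j ^ g j) * lam (Suc n) ^ g (Suc n)" by simp
    ultimately show ?thesis by (simp only: power_add power_one_right mult_ac)
  qed
  have PB: "?P (g(Suc n := 1)) = lam (Suc n) * (\<Prod>j=1..n. lam j ^ g j)" for g
  proof -
    have "(\<Prod>j=1..n. lam j ^ (g(Suc n := 1)) j) = (\<Prod>j=1..n. lam j ^ g j)"
      by (intro prod.cong) auto
    moreover have "?P (g(Suc n := 1)) = (\<Prod>j=1..n. lam j ^ (g(Suc n := 1)) j) * lam (Suc n)" by simp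
    ultimately show ?thesis by (simp only: mult_ac)
  qed
  have "csum lam (Suc n) (Suc k) = sum ?P ?A + sum ?P ?B"
    unfolding csum_def Lambda_Suc_decomp[OF n]
    by (rule sum.union_disjoint) (use dis Lambda_finite in blast)+
  also have "sum ?P ?A = lam (Suc n) * csum lam (Suc n) k"
    unfolding csum_def sum.reindex[OF injA] o_def PA by (rule sum_distrib_left[symmetric])
  also have "sum ?P ?B = lam (Suc n) * csum lam n k"
    unfolding csum_def sum.reindex[OF injB] o_def PB by (rule sum_distrib_left[symmetric])
  finally show ?thesis by (simp add: algebra_simps)
qed

lemma csum_nonneg:
  assumes "\<And>j. j \<ge> 1 \<Longrightarrow> lam j \<ge> 0"
  shows "csum lam n k \<ge> 0"
  unfolding csum_def using assms by (intro sum_nonneg prod_nonneg zero_le_power) auto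

lemma csum_bound:
  assumes pos: "\<And>j. j \<ge> 1 \<Longrightarrow> lam j \<ge> 0" and L: "\<And>j. j \<in> {1..N} \<Longrightarrow> lam j \<le> L"
    and n1: "n \<ge> 1" and nN: "n \<le> N"
  shows "csum lam n k \<le> (2 * L) ^ k"
  using n1 nN
proof (induction n arbitrary: k rule: nat_induct_at_least)
  case base
  have "lam 1 ^ k \<le> L ^ k" using pos L base by (intro power_mono) auto
  also have "L ^ k \<le> (2 * L) ^ k" using pos[of 1] L[of 1] base by (intro power_mono) auto
  finally show ?case by (simp only: csum_1)
next
  case (Suc n)
  have L0: "L \<ge> 0" using pos[of 1] L[of 1] Suc by auto
  have lS: "lam (Suc n) \<le> L" "lam (Suc n) \<ge> 0" using L[of "Suc n"] pos[of "Suc n"] Suc by auto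
  have IHn: "csum lam n k \<le> (2 * L) ^ k" for k using Suc by simp
  show ?case
  proof (induction k)
    case 0 then show ?case using csum_0[of "Suc n" lam] Suc by simp
  next
    case (Suc k)
    have "csum lam (Suc n) (Suc k) = lam (Suc n) * (csum lam (Suc n) k + csum lam n k)"
      using \<open>n \<ge> 1\<close> by (rule csum_Suc)
    also have "\<dots> \<le> L * ((2 * L) ^ k + (2 * L) ^ k)"
      using Suc.IH IHn[of k] lS L0 csum_nonneg[OF pos, where n="Suc n" and k=k] csum_nonneg[OF pos, where n=n and k=k]
      by (intro mult_mono add_mono) auto
    finally show ?case by (simp add: algebra_simps)
  qed
qed



definition acoef :: "(nat \<Rightarrow> real) \<Rightarrow> nat \<Rightarrow> nat \<Rightarrow> real" where
  "acoef lam n k = (if n = 0 then 0 else (-1)^(n-1) * (lam 1 / lam n) * (-1)^k * csum lam n k)"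

definition ecoef :: "(nat \<Rightarrow> real) \<Rightarrow> real \<Rightarrow> nat \<Rightarrow> nat \<Rightarrow> real" where
  "ecoef lam nu n k = acoef lam n k / Gamma (real k * nu + 1)"

definition Fser :: "(nat \<Rightarrow> real) \<Rightarrow> real \<Rightarrow> nat \<Rightarrow> real \<Rightarrow> real" where
  "Fser lam nu n x = (\<Sum>k. ecoef lam nu n k * x ^ k)"

definition qf :: "(nat \<Rightarrow> real) \<Rightarrow> real \<Rightarrow> nat \<Rightarrow> real \<Rightarrow> real" where
  "qf lam nu n t = Fser lam nu n (t powr nu)"

definition Dq :: "(nat \<Rightarrow> real) \<Rightarrow> real \<Rightarrow> nat \<Rightarrow> real \<Rightarrow> real" where
  "Dq lam nu n s = (\<Sum>k. diffs (ecoef lam nu n) k * (s powr nu) ^ k) * (nu * s powr (nu - 1))"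

definition Tser :: "(nat \<Rightarrow> real) \<Rightarrow> real \<Rightarrow> nat \<Rightarrow> real \<Rightarrow> real" where
  "Tser lam nu n t = (\<Sum>k. acoef lam (Suc n) (Suc k) * (t powr nu) ^ k / Gamma (real k * nu + 1))"

locale fpb =
  fixes lam :: "nat \<Rightarrow> real" and nu :: real
  assumes lam_pos: "\<And>n. n \<ge> 1 \<Longrightarrow> lam n > 0"
    and nu0: "0 < nu" and nu1: "nu \<le> 1"
begin

lemma csum_Suc0: "csum lam' (Suc 0) k = lam' (Suc 0) ^ k"
  using csum_1[of lam' k] by simp

lemma lam_nonneg: "j \<ge> 1 \<Longrightarrow> lam j \<ge> 0"
  using lam_pos[of j] by simp

lemma acoef_rec:
  assumes n: "n \<ge> 1"
  shows "acoef lam n (Suc k) = - lam n * acoef lam n k + lam (n-1) * acoef lam (n-1) k"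
proof (cases "n = 1")
  case True
  then show ?thesis by (simp add: acoef_def csum_Suc0)
next
  case False
  then obtain m where m: "n = Suc m" "m \<ge> 1" using n by (cases n) auto
  have lm: "lam m > 0" "lam (Suc m) > 0" using lam_pos m by auto
  have "acoef lam n (Suc k) = (-1)^m * (lam 1 / lam (Suc m)) * (-1)^(Suc k) *
      (lam (Suc m) * (csum lam (Suc m) k + csum lam m k))"
    unfolding acoef_def m csum_Suc[OF m(2)] by simp
  also have "\<dots> = - lam (Suc m) * ((-1)^m * (lam 1 / lam (Suc m)) * (-1)^k * csum lam (Suc m) k)
      + lam m * ((-1)^(m-1) * (lam 1 / lam m) * (-1)^k * csum lam m k)"
  proof -
    have "(-1::real)^m = - ((-1)^(m-1))" using m(2) by (cases m) auto
    then show ?thesis using lm by (simp add: field_simps)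
  qed
  also have "\<dots> = - lam n * acoef lam n k + lam (n-1) * acoef lam (n-1) k"
    unfolding acoef_def m using m(2) by simp
  finally show ?thesis .
qed

lemma acoef_0: "n \<ge> 1 \<Longrightarrow> acoef lam n 0 = (if n = 1 then 1 else 0)"
  using lam_pos[of 1] by (auto simp: acoef_def csum_Suc0 csum_0)

lemma acoef_bound:
  "\<exists>C M. C \<ge> 0 \<and> M \<ge> 0 \<and> (\<forall>k. \<bar>acoef lam n k\<bar> \<le> C * M ^ k)"
proof (cases "n = 0")
  case True then show ?thesis by (intro exI[of _ 0]) (auto simp: acoef_def)
next
  case False
  define L where "L = (\<Sum>j=1..n. lam j)"
  have L: "lam j \<le> L" if "j \<in> {1..n}" for j
    unfolding L_def using that lam_nonneg by (intro member_le_sum) auto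
  have L0: "L \<ge> 0" unfolding L_def using lam_nonneg by (intro sum_nonneg) auto
  have "\<bar>acoef lam n k\<bar> \<le> (lam 1 / lam n) * (2 * L) ^ k" for k
  proof -
    have "\<bar>acoef lam n k\<bar> = (lam 1 / lam n) * csum lam n k"
      using False lam_pos[of 1] lam_pos[of n] csum_nonneg[OF lam_nonneg, where n=n and k=k]
      by (simp add: acoef_def abs_mult power_abs)
    also have "\<dots> \<le> (lam 1 / lam n) * (2 * L) ^ k"
      using False lam_pos[of 1] lam_pos[of n]
      by (intro mult_left_mono csum_bound[OF lam_nonneg L]) auto
    finally show ?thesis .
  qed
  moreover have "lam 1 / lam n \<ge> 0" using False lam_pos[of 1] lam_pos[of n] by simp
  ultimately show ?thesis using L0 by (intro exI[of _ "lam 1 / lam n"] exI[of _ "2 * L"]) auto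
qed

lemma Gamma_pos': "Gamma (real k * nu + 1) > 0"
  using nu0 by (intro Gamma_real_pos add_nonneg_pos mult_nonneg_nonneg) auto

lemma ecoef_abs_summable: "summable (\<lambda>k. \<bar>ecoef lam nu n k\<bar> * y ^ k)" if "y \<ge> 0" for y
proof -
  obtain C M where CM: "C \<ge> 0" "M \<ge> 0" "\<And>k. \<bar>acoef lam n k\<bar> \<le> C * M ^ k"
    using acoef_bound[of n] by blast
  have s: "summable (\<lambda>k. C * ((M * y) ^ k / Gamma (real k * nu + 1)))"
    using mittag_summable[OF nu0, of "M * y"] CM that by (intro summable_mult) auto
  show ?thesis
  proof (rule summable_comparison_test'[OF s])
    fix k :: nat
    have "norm (\<bar>ecoef lam nu n k\<bar> * y ^ k) = \<bar>acoef lam n k\<bar> * y ^ k / Gamma (real k * nu + 1)"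
      using Gamma_pos'[of k] that by (simp add: ecoef_def abs_mult)
    also have "\<dots> \<le> C * M ^ k * y ^ k / Gamma (real k * nu + 1)"
      using CM(3)[of k] that Gamma_pos'[of k] by (intro divide_right_mono mult_right_mono) auto
    also have "\<dots> = C * ((M * y) ^ k / Gamma (real k * nu + 1))" by (simp add: power_mult_distrib)
    finally show "norm (\<bar>ecoef lam nu n k\<bar> * y ^ k) \<le> C * ((M * y) ^ k / Gamma (real k * nu + 1))" .
  qed
qed

lemma ecoef_summable: "summable (\<lambda>k. ecoef lam nu n k * y ^ k)"
proof -
  have "summable (\<lambda>k. norm (ecoef lam nu n k * y ^ k))"
    using ecoef_abs_summable[of "\<bar>y\<bar>" n] by (simp add: abs_mult power_abs)
  then show ?thesis by (rule summable_norm_cancel)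
qed

lemma ecoef_abs_summable': "summable (\<lambda>k. \<bar>ecoef lam nu n k\<bar> * y ^ k)"
proof -
  have "summable (\<lambda>k. norm (\<bar>ecoef lam nu n k\<bar> * y ^ k))"
    using ecoef_abs_summable[of "\<bar>y\<bar>" n] by (simp add: abs_mult power_abs)
  then show ?thesis by (rule summable_norm_cancel)
qed

lemma diffs_summable: "summable (\<lambda>k. diffs (ecoef lam nu n) k * y ^ k)"
  by (rule termdiff_converges_all) (rule ecoef_summable)

lemma diffs_abs_summable: "summable (\<lambda>k. diffs (\<lambda>k. \<bar>ecoef lam nu n k\<bar>) k * y ^ k)"
  by (rule termdiff_converges_all) (rule ecoef_abs_summable')

lemma abs_diffs: "\<bar>diffs (ecoef lam nu n) k\<bar> = diffs (\<lambda>k. \<bar>ecoef lam nu n k\<bar>) k"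
  by (simp add: diffs_def abs_mult)

lemma Fser_deriv: "(Fser lam nu n has_real_derivative (\<Sum>k. diffs (ecoef lam nu n) k * x ^ k)) (at x)"
  unfolding Fser_def[abs_def]
  by (rule termdiffs_strong_converges_everywhere) (rule ecoef_summable)

lemma qf_deriv:
  assumes s: "s > 0"
  shows "(qf lam nu n has_real_derivative Dq lam nu n s) (at s)"
proof -
  have "((\<lambda>t. Fser lam nu n (t powr nu)) has_real_derivative
     (\<Sum>k. diffs (ecoef lam nu n) k * (s powr nu) ^ k) * (nu * s powr (nu - 1))) (at s)"
    by (rule DERIV_chain2[OF Fser_deriv has_real_derivative_powr[OF s]])
  then show ?thesis unfolding qf_def[abs_def] Dq_def .
qed

lemma Fser_cont: "continuous_on UNIV (Fser lam nu n)"
  using Fser_deriv by (meson DERIV_isCont continuous_at_imp_continuous_on)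

lemma qf_cont: "continuous_on {0..} (qf lam nu n)"
proof -
  have "continuous_on {0..} (\<lambda>t::real. t powr nu)"
    using nu0 by (intro continuous_on_powr') auto
  then show ?thesis unfolding qf_def[abs_def]
    by (rule continuous_on_compose2[OF Fser_cont]) auto
qed

lemma qf_0: "n \<ge> 1 \<Longrightarrow> qf lam nu n 0 = (if n = 1 then 1 else 0)"
proof -
  assume n: "n \<ge> 1"
  have "Fser lam nu n 0 = ecoef lam nu n 0"
    unfolding Fser_def using powser_zero[of "ecoef lam nu n"] by simp
  then show ?thesis using acoef_0[OF n] by (simp add: qf_def ecoef_def)
qed

lemma qf_zero: "qf lam nu 0 t = 0"
  by (simp add: qf_def Fser_def ecoef_def acoef_def)

lemma Tser_eq:
  assumes n: "n \<ge> 1"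
  shows "Tser lam nu (n-1) t = - lam n * qf lam nu n t + lam (n-1) * qf lam nu (n-1) t"
proof -
  let ?y = "t powr nu"
  have eq: "acoef lam n (Suc k) * ?y ^ k / Gamma (real k * nu + 1) =
      - lam n * (ecoef lam nu n k * ?y ^ k) + lam (n-1) * (ecoef lam nu (n-1) k * ?y ^ k)" for k
    using Gamma_pos'[of k] unfolding acoef_rec[OF n] ecoef_def by (simp add: field_simps)
  have "(\<lambda>k. - lam n * (ecoef lam nu n k * ?y ^ k) + lam (n-1) * (ecoef lam nu (n-1) k * ?y ^ k)) sums
      (- lam n * Fser lam nu n ?y + lam (n-1) * Fser lam nu (n-1) ?y)"
    unfolding Fser_def by (intro sums_add sums_mult summable_sums ecoef_summable)
  then have "(\<lambda>k. acoef lam n (Suc k) * ?y ^ k / Gamma (real k * nu + 1)) sums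
      (- lam n * qf lam nu n t + lam (n-1) * qf lam nu (n-1) t)"
    unfolding eq qf_def .
  then show ?thesis unfolding Tser_def using n by (simp add: sums_iff)
qed

lemma Tser_summable:
  assumes n: "n \<ge> 1"
  shows "(\<lambda>k. acoef lam n (Suc k) * (t powr nu) ^ k / Gamma (real k * nu + 1)) sums Tser lam nu (n-1) t"
proof -
  let ?y = "t powr nu"
  have eq: "acoef lam n (Suc k) * ?y ^ k / Gamma (real k * nu + 1) =
      - lam n * (ecoef lam nu n k * ?y ^ k) + lam (n-1) * (ecoef lam nu (n-1) k * ?y ^ k)" for k
    using Gamma_pos'[of k] unfolding acoef_rec[OF n] ecoef_def by (simp add: field_simps)
  have "summable (\<lambda>k. - lam n * (ecoef lam nu n k * ?y ^ k) + lam (n-1) * (ecoef lam nu (n-1) k * ?y ^ k))"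
    by (intro summable_add summable_mult ecoef_summable)
  then have "summable (\<lambda>k. acoef lam n (Suc k) * ?y ^ k / Gamma (real k * nu + 1))"
    unfolding eq .
  then show ?thesis unfolding Tser_def using n by (simp add: summable_sums)
qed

end


context fpb
begin

lemma gterm_eq:
  assumes s: "s \<in> {0..t}"
  shows "(t - s) powr (-nu) * (diffs (ecoef lam nu n) k * (s powr nu) ^ k * (nu * s powr (nu - 1)))
     = (nu * diffs (ecoef lam nu n) k) * (s powr (real (Suc k) * nu - 1) * (t - s) powr ((1 - nu) - 1))"
proof (cases "s = 0")
  case True then show ?thesis by simp
next
  case False
  then have s0: "s > 0" using s by auto
  have "(s powr nu) ^ k * s powr (nu - 1) = s powr (real k * nu) * s powr (nu - 1)"
    using s0 by (simp add: powr_power)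
  also have "\<dots> = s powr (real (Suc k) * nu - 1)" by (simp add: powr_add[symmetric] algebra_simps)
  finally have e: "(s powr nu) ^ k * s powr (nu - 1) = s powr (real (Suc k) * nu - 1)" .
  have "(t - s) powr (-nu) * (diffs (ecoef lam nu n) k * (s powr nu) ^ k * (nu * s powr (nu - 1)))
      = (nu * diffs (ecoef lam nu n) k) * (((s powr nu) ^ k * s powr (nu - 1)) * (t - s) powr (-nu))"
    by (simp add: algebra_simps)
  then show ?thesis unfolding e by simp
qed

lemma coef_identity:
  assumes nu1': "nu < 1"
  shows "nu * diffs (ecoef lam nu n) k * Beta (real (Suc k) * nu) (1 - nu)
     = acoef lam n (Suc k) * Gamma (1 - nu) / Gamma (real k * nu + 1)"
proof -
  define A where "A = real (Suc k) * nu"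
  have A: "A > 0" unfolding A_def using nu0 by simp
  have GA: "Gamma A > 0" using A by (rule Gamma_real_pos)
  have GA1: "Gamma (A + 1) = A * Gamma A" using A by (rule Gamma_plus1_real)
  have AB: "A + (1 - nu) = real k * nu + 1" unfolding A_def by (simp add: algebra_simps)
  have Gk: "Gamma (real k * nu + 1) > 0" by (rule Gamma_pos')
  have "diffs (ecoef lam nu n) k = real (Suc k) * acoef lam n (Suc k) / Gamma (A + 1)"
    unfolding diffs_def ecoef_def A_def by (simp add: algebra_simps)
  then have "nu * diffs (ecoef lam nu n) k * Beta A (1 - nu)
     = nu * (real (Suc k) * acoef lam n (Suc k) / (A * Gamma A)) * (Gamma A * Gamma (1 - nu) / Gamma (real k * nu + 1))"
    unfolding Beta_def GA1 AB by simp
  also have "\<dots> = acoef lam n (Suc k) * Gamma (1 - nu) / Gamma (real k * nu + 1)"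
  proof -
    have hA: "nu * real (Suc k) = A" unfolding A_def by simp
    have "nu * (real (Suc k) * acoef lam n (Suc k) / (A * Gamma A)) =
        (nu * real (Suc k)) * acoef lam n (Suc k) / (A * Gamma A)"
      by (simp only: times_divide_eq_right mult.assoc)
    also have "\<dots> = A * acoef lam n (Suc k) / (A * Gamma A)" unfolding hA ..
    also have "\<dots> = acoef lam n (Suc k) / Gamma A" using A by simp
    finally have hh: "nu * (real (Suc k) * acoef lam n (Suc k) / (A * Gamma A)) = acoef lam n (Suc k) / Gamma A" .
    show ?thesis unfolding hh using GA by simp
  qed
  finally show ?thesis unfolding A_def .
qed

lemma Dq_kernel_integral:
  assumes n: "n \<ge> 1" and nu1': "nu < 1" and t: "t > 0"
  shows "((\<lambda>s. (t - s) powr (-nu) * Dq lam nu n s) has_integral Gamma (1 - nu) * Tser lam nu (n-1) t) {0..t}"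
proof -
  let ?e = "ecoef lam nu n"
  define g where "g k s = (t - s) powr (-nu) * (diffs ?e k * (s powr nu) ^ k * (nu * s powr (nu - 1)))" for k s
  define f where "f N s = (\<Sum>k<N. g k s)" for N s
  define y where "y N = (\<Sum>k<N. acoef lam n (Suc k) * (t powr nu) ^ k / Gamma (real k * nu + 1) * Gamma (1 - nu))" for N
  define K where "K = nu * (\<Sum>k. diffs (\<lambda>k. \<bar>?e k\<bar>) k * (t powr nu) ^ k)"
  define h where "h s = K * (s powr (nu - 1) * (t - s) powr ((1 - nu) - 1))" for s
  have B1: "0 < 1 - nu" using nu1' by simp
  have gint: "(g k has_integral acoef lam n (Suc k) * (t powr nu) ^ k / Gamma (real k * nu + 1) * Gamma (1 - nu)) {0..t}" for k
  proof -
    have "((\<lambda>s. s powr (real (Suc k) * nu - 1) * (t - s) powr ((1 - nu) - 1)) has_integral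
        t powr (real (Suc k) * nu + (1 - nu) - 1) * Beta (real (Suc k) * nu) (1 - nu)) {0..t}"
      by (rule Beta_scaled) (use nu0 B1 t in auto)
    then have "((\<lambda>s. (nu * diffs ?e k) * (s powr (real (Suc k) * nu - 1) * (t - s) powr ((1 - nu) - 1))) has_integral
        (nu * diffs ?e k) * (t powr (real (Suc k) * nu + (1 - nu) - 1) * Beta (real (Suc k) * nu) (1 - nu))) {0..t}"
      by (rule has_integral_mult_right)
    moreover have "t powr (real (Suc k) * nu + (1 - nu) - 1) = (t powr nu) ^ k"
      using t by (simp add: powr_power algebra_simps)
    moreover have "(nu * diffs ?e k) * ((t powr nu) ^ k * Beta (real (Suc k) * nu) (1 - nu)) =
        acoef lam n (Suc k) * (t powr nu) ^ k / Gamma (real k * nu + 1) * Gamma (1 - nu)"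
    proof -
      have "(nu * diffs ?e k) * ((t powr nu) ^ k * Beta (real (Suc k) * nu) (1 - nu)) =
          (t powr nu) ^ k * (nu * diffs ?e k * Beta (real (Suc k) * nu) (1 - nu))"
        by (simp only: mult_ac)
      also have "\<dots> = (t powr nu) ^ k * (acoef lam n (Suc k) * Gamma (1 - nu) / Gamma (real k * nu + 1))"
        by (simp only: coef_identity[OF nu1'])
      finally show ?thesis by simp
    qed
    ultimately have "((\<lambda>s. (nu * diffs ?e k) * (s powr (real (Suc k) * nu - 1) * (t - s) powr ((1 - nu) - 1))) has_integral
        acoef lam n (Suc k) * (t powr nu) ^ k / Gamma (real k * nu + 1) * Gamma (1 - nu)) {0..t}"
      by metis
    then show ?thesis
      by (rule has_integral_eq[rotated]) (unfold g_def, rule gterm_eq[symmetric], simp)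
  qed
  show ?thesis
  proof (rule has_integral_dominated_convergence)
    fix N show "(f N has_integral y N) {0..t}"
      unfolding f_def y_def by (intro has_integral_sum gint) auto
  next
    show "h integrable_on {0..t}"
    proof -
      have "((\<lambda>s. s powr (nu - 1) * (t - s) powr ((1 - nu) - 1)) has_integral
          t powr (nu + (1 - nu) - 1) * Beta nu (1 - nu)) {0..t}"
        by (rule Beta_scaled) (use nu0 B1 t in auto)
      then show ?thesis unfolding h_def by (intro integrable_on_mult_right) (rule has_integral_integrable)
    qed
  next
    fix N show "\<forall>s\<in>{0..t}. norm (f N s) \<le> h s"
    proof
      fix s assume s: "s \<in> {0..t}"
      have fN: "f N s = (t - s) powr (-nu) * (nu * s powr (nu - 1)) * (\<Sum>k<N. diffs ?e k * (s powr nu) ^ k)"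
        unfolding f_def g_def by (simp add: sum_distrib_left sum_distrib_right algebra_simps)
      have sy: "s powr nu \<le> t powr nu" using s nu0 by (intro powr_mono2) auto
      have "\<bar>\<Sum>k<N. diffs ?e k * (s powr nu) ^ k\<bar> \<le> (\<Sum>k<N. diffs (\<lambda>k. \<bar>?e k\<bar>) k * (s powr nu) ^ k)"
        by (rule order.trans[OF sum_abs]) (simp add: abs_mult abs_diffs)
      also have "\<dots> \<le> (\<Sum>k. diffs (\<lambda>k. \<bar>?e k\<bar>) k * (s powr nu) ^ k)"
        by (rule sum_le_suminf[OF diffs_abs_summable]) (auto simp: diffs_def)
      also have "\<dots> \<le> (\<Sum>k. diffs (\<lambda>k. \<bar>?e k\<bar>) k * (t powr nu) ^ k)"
        by (rule suminf_le[OF _ diffs_abs_summable diffs_abs_summable])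
           (use sy in \<open>auto intro!: mult_left_mono power_mono simp: diffs_def\<close>)
      finally have P: "\<bar>\<Sum>k<N. diffs ?e k * (s powr nu) ^ k\<bar> \<le> (\<Sum>k. diffs (\<lambda>k. \<bar>?e k\<bar>) k * (t powr nu) ^ k)" .
      have "norm (f N s) = ((t - s) powr (-nu) * (nu * s powr (nu - 1))) * \<bar>\<Sum>k<N. diffs ?e k * (s powr nu) ^ k\<bar>"
        unfolding fN using nu0 by (simp add: abs_mult)
      also have "\<dots> \<le> ((t - s) powr (-nu) * (nu * s powr (nu - 1))) * (\<Sum>k. diffs (\<lambda>k. \<bar>?e k\<bar>) k * (t powr nu) ^ k)"
        using P nu0 by (intro mult_left_mono) auto
      also have "\<dots> = h s" unfolding h_def K_def by (simp add: algebra_simps)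
      finally show "norm (f N s) \<le> h s" .
    qed
  next
    show "\<forall>s\<in>{0..t}. (\<lambda>N. f N s) \<longlonglongrightarrow> (t - s) powr (-nu) * Dq lam nu n s"
    proof
      fix s assume s: "s \<in> {0..t}"
      have fN: "f N s = (t - s) powr (-nu) * ((\<Sum>k<N. diffs ?e k * (s powr nu) ^ k) * (nu * s powr (nu - 1)))" for N
        unfolding f_def g_def by (simp add: sum_distrib_left sum_distrib_right algebra_simps)
      have "(\<lambda>N. \<Sum>k<N. diffs ?e k * (s powr nu) ^ k) \<longlonglongrightarrow> (\<Sum>k. diffs ?e k * (s powr nu) ^ k)"
        by (rule summable_LIMSEQ) (rule diffs_summable)
      then show "(\<lambda>N. f N s) \<longlonglongrightarrow> (t - s) powr (-nu) * Dq lam nu n s"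
        unfolding fN Dq_def by (intro tendsto_intros)
    qed
  next
    have "(\<lambda>N. \<Sum>k<N. acoef lam n (Suc k) * (t powr nu) ^ k / Gamma (real k * nu + 1)) \<longlonglongrightarrow> Tser lam nu (n-1) t"
      using Tser_summable[OF n, of t] by (simp add: sums_def)
    then have "(\<lambda>N. (\<Sum>k<N. acoef lam n (Suc k) * (t powr nu) ^ k / Gamma (real k * nu + 1)) * Gamma (1 - nu))
        \<longlonglongrightarrow> Tser lam nu (n-1) t * Gamma (1 - nu)"
      by (intro tendsto_intros)
    then have "(\<lambda>N. \<Sum>k<N. acoef lam n (Suc k) * (t powr nu) ^ k / Gamma (real k * nu + 1) * Gamma (1 - nu))
        \<longlonglongrightarrow> Tser lam nu (n-1) t * Gamma (1 - nu)"
      by (simp only: sum_distrib_right)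
    then show "y \<longlonglongrightarrow> Gamma (1 - nu) * Tser lam nu (n-1) t"
      unfolding y_def by (simp only: mult.commute[of "Tser lam nu (n-1) t" "Gamma (1 - nu)"])
  qed
qed

lemma Dq_nu1:
  assumes n: "n \<ge> 1" and nu1': "nu = 1" and t: "t > 0"
  shows "Dq lam nu n t = Tser lam nu (n-1) t"
proof -
  have "(\<lambda>k. diffs (ecoef lam nu n) k * (t powr nu) ^ k) = (\<lambda>k. acoef lam n (Suc k) * (t powr nu) ^ k / Gamma (real k * nu + 1))"
  proof
    fix k
    have G: "Gamma (real (Suc k) * nu + 1) = real (Suc k) * Gamma (real k * nu + 1)"
      using Gamma_plus1_real[of "real (Suc k)"] nu1' by (simp add: add.commute)
    have Gp: "Gamma (real k * nu + 1) > 0" by (rule Gamma_pos')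
    have "diffs (ecoef lam nu n) k = real (Suc k) * (acoef lam n (Suc k) / (real (Suc k) * Gamma (real k * nu + 1)))"
      unfolding diffs_def ecoef_def G ..
    also have "\<dots> = acoef lam n (Suc k) / Gamma (real k * nu + 1)"
      by (simp del: of_nat_Suc)
    finally show "diffs (ecoef lam nu n) k * (t powr nu) ^ k = acoef lam n (Suc k) * (t powr nu) ^ k / Gamma (real k * nu + 1)"
      by simp
  qed
  moreover have "nu * t powr (nu - 1) = 1" using nu1' t by simp
  ultimately show ?thesis unfolding Dq_def Tser_def using n by simp
qed

end


lemma caputo_max_nonneg:
  fixes h H :: "real \<Rightarrow> real" and nu t0 :: real
  assumes nu: "0 < nu" "nu < 1" and t0: "t0 > 0"
    and hc: "continuous_on {0..t0} h"
    and hd: "\<And>s. s \<in> {0<..t0} \<Longrightarrow> (h has_real_derivative H s) (at s)"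
    and hi: "(\<lambda>s. (t0 - s) powr (-nu) * H s) integrable_on {0..t0}"
    and hmax: "\<And>s. s \<in> {0..t0} \<Longrightarrow> h s \<le> h t0"
  shows "integral {0..t0} (\<lambda>s. (t0 - s) powr (-nu) * H s) \<ge> 0"
proof -
  define g where "g s = (t0 - s) powr (-nu) * H s" for s
  define I where "I x = integral {0..x} g" for x
  have lower: "I x \<ge> (t0 - x) powr (-nu) * (h x - h t0)" if x: "x \<in> {0<..<t0}" for x
  proof -
    define phi where "phi s = nu * (t0 - s) powr (-nu - 1) * (h s - h t0)" for s
    define w where "w s = (t0 - s) powr (-nu) * (h s - h t0)" for s
    have "((\<lambda>s. phi s + g s) has_integral (w x - w 0)) {0..x}"
    proof (rule fundamental_theorem_of_calculus_interior)
      show "0 \<le> x" using x by auto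
      have "continuous_on {0..x} h" using x by (intro continuous_on_subset[OF hc]) auto
      moreover have "continuous_on {0..x} (\<lambda>s. (t0 - s) powr (-nu))"
        using x by (intro continuous_intros) auto
      ultimately show "continuous_on {0..x} w" unfolding w_def using x by (intro continuous_intros) auto
    next
      fix s assume s: "s \<in> {0<..<x}"
      then have st: "t0 - s > 0" using x by auto
      have hs: "(h has_real_derivative H s) (at s)" using s x by (intro hd) auto
      have gd: "((\<lambda>s. t0 - s) has_real_derivative (-1)) (at s)"
        by (auto intro!: derivative_eq_intros)
      have d1: "((\<lambda>s. (t0 - s) powr (-nu)) has_real_derivative (-nu * (t0 - s) powr (-nu - 1) * (-1))) (at s)"
        using DERIV_chain2[where f="\<lambda>z. z powr (-nu)" and g="\<lambda>s. t0 - s", OF has_real_derivative_powr[OF st] gd]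
        by simp
      have "(w has_real_derivative (-nu * (t0 - s) powr (-nu - 1) * (-1)) * (h s - h t0) + (t0 - s) powr (-nu) * H s) (at s)"
        unfolding w_def using DERIV_mult[OF d1 DERIV_diff[OF hs DERIV_const[of "h t0"]]] by (simp add: ac_simps)
      moreover have "(-nu * (t0 - s) powr (-nu - 1) * (-1)) * (h s - h t0) + (t0 - s) powr (-nu) * H s = phi s + g s"
        unfolding phi_def g_def by simp
      ultimately show "(w has_vector_derivative phi s + g s) (at s)"
        by (simp add: has_real_derivative_iff_has_vector_derivative)
    qed
    then have int1: "(\<lambda>s. phi s + g s) integrable_on {0..x}" and v1: "integral {0..x} (\<lambda>s. phi s + g s) = w x - w 0"
      by (auto simp: has_integral_iff)
    have gi: "g integrable_on {0..x}" unfolding g_def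
      by (rule integrable_subinterval_real[OF hi]) (use x in auto)
    have pi: "phi integrable_on {0..x}"
    proof -
      have "(\<lambda>s. (phi s + g s) - g s) integrable_on {0..x}" by (rule integrable_diff[OF int1 gi])
      then show ?thesis by simp
    qed
    have "integral {0..x} phi \<le> integral {0..x} (\<lambda>s. 0)"
    proof (rule integral_le[OF pi])
      fix s assume s: "s \<in> {0..x}"
      then have "h s \<le> h t0" using x by (intro hmax) auto
      then show "phi s \<le> 0" unfolding phi_def using nu by (simp add: mult_nonneg_nonpos)
    qed (rule integrable_0)
    then have p0: "integral {0..x} phi \<le> 0" by simp
    have "integral {0..x} (\<lambda>s. phi s + g s) = integral {0..x} phi + I x"
      unfolding I_def by (rule integral_add[OF pi gi])
    then have "I x = w x - w 0 - integral {0..x} phi" using v1 by simp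
    moreover have "w 0 \<le> 0" unfolding w_def using hmax[of 0] t0 by (simp add: mult_nonneg_nonpos)
    ultimately have "I x \<ge> w x" using p0 by simp
    then show ?thesis unfolding w_def .
  qed
  have gi: "g integrable_on {0..t0}" unfolding g_def by (rule hi)
  have Ic: "continuous_on {0..t0} I" unfolding I_def by (rule indefinite_integral_continuous_1[OF gi])
  have lim1: "(I \<longlongrightarrow> I t0) (at_left t0)"
  proof -
    have "(I \<longlongrightarrow> I t0) (at t0 within {0..t0})"
      using Ic t0 unfolding continuous_on_def by auto
    then show ?thesis using at_within_Icc_at_left[OF t0] by simp
  qed
  have lim2: "((\<lambda>x. (t0 - x) powr (-nu) * (h x - h t0)) \<longlongrightarrow> 0) (at_left t0)"
  proof -
    have d: "((\<lambda>y. (h y - h t0) / (y - t0)) \<longlongrightarrow> H t0) (at_left t0)"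
    proof -
      have "(h has_real_derivative H t0) (at t0)" using t0 by (intro hd) auto
      then have "((\<lambda>y. (h y - h t0) / (y - t0)) \<longlongrightarrow> H t0) (at t0)"
        by (simp add: has_field_derivative_iff)
      then show ?thesis by (rule filterlim_mono) (simp_all add: at_le)
    qed
    have p: "((\<lambda>x. (t0 - x) powr (1 - nu)) \<longlongrightarrow> 0) (at_left t0)"
    proof (rule tendsto_zero_powrI[where b="1 - nu"])
      have "((\<lambda>x. t0 - x) \<longlongrightarrow> t0 - t0) (at_left t0)" by (intro tendsto_intros)
      then show "((\<lambda>x. t0 - x) \<longlongrightarrow> 0) (at_left t0)" by simp
      show "\<forall>\<^sub>F x in at_left t0. 0 \<le> t0 - x"
        using eventually_at_left_real[of 0 t0] t0 by (auto elim!: eventually_mono)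
    qed (use nu in auto)
    have "((\<lambda>x. - ((t0 - x) powr (1 - nu) * ((h x - h t0) / (x - t0)))) \<longlongrightarrow> - (0 * H t0)) (at_left t0)"
      by (intro tendsto_intros p d)
    then have "((\<lambda>x. - ((t0 - x) powr (1 - nu) * ((h x - h t0) / (x - t0)))) \<longlongrightarrow> 0) (at_left t0)" by simp
    moreover have "\<forall>\<^sub>F x in at_left t0. - ((t0 - x) powr (1 - nu) * ((h x - h t0) / (x - t0)))
        = (t0 - x) powr (-nu) * (h x - h t0)"
      using eventually_at_left_real[OF t0]
    proof (elim eventually_mono)
      fix x assume x: "x \<in> {0<..<t0}"
      then have tx: "t0 - x > 0" by auto
      have e: "(t0 - x) powr (1 - nu) = (t0 - x) * (t0 - x) powr (-nu)"
        using tx by (simp add: powr_add[symmetric] powr_mult_base)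
      have "x - t0 \<noteq> 0" using tx by simp
      then show "- ((t0 - x) powr (1 - nu) * ((h x - h t0) / (x - t0))) = (t0 - x) powr (-nu) * (h x - h t0)"
        unfolding e by (simp add: field_simps)
    qed
    ultimately show ?thesis by (rule Lim_transform_eventually)
  qed
  have "0 \<le> I t0"
  proof (rule tendsto_le[OF _ lim1 lim2])
    show "\<forall>\<^sub>F x in at_left t0. (t0 - x) powr (-nu) * (h x - h t0) \<le> I x"
      using eventually_at_left_real[of 0 t0] t0 by (auto elim!: eventually_mono intro: lower)
  qed simp
  then show ?thesis unfolding I_def g_def .
qed

lemma uniq_side:
  fixes d D :: "real \<Rightarrow> real" and nu c :: real
  assumes nu: "0 < nu" "nu \<le> 1" and c: "c > 0"
    and dc: "continuous_on {0..} d" and d0: "d 0 = 0"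
    and dd: "\<And>s. s > 0 \<Longrightarrow> (d has_real_derivative D s) (at s)"
    and di: "\<And>t. t > 0 \<Longrightarrow> nu < 1 \<Longrightarrow> (\<lambda>s. (t - s) powr (-nu) * D s) integrable_on {0..t}"
    and deq: "\<And>t. t > 0 \<Longrightarrow>
       (if nu = 1 then D t else (1 / Gamma (1 - nu)) * integral {0..t} (\<lambda>s. (t - s) powr (-nu) * D s)) = - c * d t"
    and t: "t \<ge> 0"
  shows "d t \<le> 0"
proof (rule ccontr)
  assume "\<not> d t \<le> 0"
  then have dt: "d t > 0" by simp
  then have t0': "t > 0" using t d0 by (cases "t = 0") auto
  have "\<exists>x\<in>{0..t}. \<forall>y\<in>{0..t}. d y \<le> d x"
    by (rule continuous_attains_sup) (use t continuous_on_subset[OF dc] in auto)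
  then obtain t0 where t0: "t0 \<in> {0..t}" and mx: "\<And>y. y \<in> {0..t} \<Longrightarrow> d y \<le> d t0" by blast
  have dt0: "d t0 > 0" using mx[of t] t dt by auto
  then have t0p: "t0 > 0" using t0 d0 by (cases "t0 = 0") auto
  have mx0: "\<And>y. y \<in> {0..t0} \<Longrightarrow> d y \<le> d t0" using t0 by (intro mx) auto
  show False
  proof (cases "nu = 1")
    case True
    have "D t0 \<ge> 0"
    proof -
      have "((\<lambda>y. (d y - d t0) / (y - t0)) \<longlongrightarrow> D t0) (at t0)"
        using dd[OF t0p] by (simp add: has_field_derivative_iff)
      then have lim: "((\<lambda>y. (d y - d t0) / (y - t0)) \<longlongrightarrow> D t0) (at_left t0)"
        by (rule filterlim_mono) (simp_all add: at_le)
      show ?thesis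
      proof (rule tendsto_le[OF _ lim tendsto_const])
        show "\<forall>\<^sub>F x in at_left t0. 0 \<le> (d x - d t0) / (x - t0)"
          using eventually_at_left_real[OF t0p]
        proof (elim eventually_mono)
          fix x assume x: "x \<in> {0<..<t0}"
          then have "d x - d t0 \<le> 0" using mx0[of x] by auto
          moreover have "x - t0 < 0" using x by auto
          ultimately show "0 \<le> (d x - d t0) / (x - t0)" by (simp add: divide_nonpos_neg)
        qed
      qed simp
    qed
    moreover have "D t0 = - c * d t0" using deq[OF t0p] True by simp
    ultimately show False using mult_pos_pos[OF c dt0] by linarith
  next
    case False
    then have nu1: "nu < 1" using nu by simp
    have "integral {0..t0} (\<lambda>s. (t0 - s) powr (-nu) * D s) \<ge> 0"
    proof (rule caputo_max_nonneg[OF nu(1) nu1 t0p])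
      show "continuous_on {0..t0} d" by (rule continuous_on_subset[OF dc]) auto
      show "\<And>s. s \<in> {0<..t0} \<Longrightarrow> (d has_real_derivative D s) (at s)" by (intro dd) auto
      show "(\<lambda>s. (t0 - s) powr (-nu) * D s) integrable_on {0..t0}" by (rule di[OF t0p nu1])
    qed (rule mx0)
    moreover have "Gamma (1 - nu) > 0" using nu1 by (intro Gamma_real_pos) simp
    ultimately have "(1 / Gamma (1 - nu)) * integral {0..t0} (\<lambda>s. (t0 - s) powr (-nu) * D s) \<ge> 0"
      by simp
    moreover have "(1 / Gamma (1 - nu)) * integral {0..t0} (\<lambda>s. (t0 - s) powr (-nu) * D s) = - c * d t0"
      using deq[OF t0p] False by simp
    ultimately show False using mult_pos_pos[OF c dt0] by linarith
  qed
qed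

lemma uniq:
  fixes d D :: "real \<Rightarrow> real" and nu c :: real
  assumes nu: "0 < nu" "nu \<le> 1" and c: "c > 0"
    and dc: "continuous_on {0..} d" and d0: "d 0 = 0"
    and dd: "\<And>s. s > 0 \<Longrightarrow> (d has_real_derivative D s) (at s)"
    and di: "\<And>t. t > 0 \<Longrightarrow> nu < 1 \<Longrightarrow> (\<lambda>s. (t - s) powr (-nu) * D s) integrable_on {0..t}"
    and deq: "\<And>t. t > 0 \<Longrightarrow>
       (if nu = 1 then D t else (1 / Gamma (1 - nu)) * integral {0..t} (\<lambda>s. (t - s) powr (-nu) * D s)) = - c * d t"
    and t: "t \<ge> 0"
  shows "d t = 0"
proof -
  have 1: "d t \<le> 0" by (rule uniq_side[OF nu c dc d0 dd di deq t])
  have "(\<lambda>t. - d t) t \<le> 0"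
  proof (rule uniq_side[OF nu c, where d="\<lambda>t. - d t" and D="\<lambda>s. - D s"])
    show "continuous_on {0..} (\<lambda>t. - d t)" using dc by (intro continuous_intros)
    show "- d 0 = 0" using d0 by simp
    show "((\<lambda>t. - d t) has_real_derivative - D s) (at s)" if "s > 0" for s
      using dd[OF that] by (intro derivative_intros)
    show "(\<lambda>s. (t - s) powr (-nu) * - D s) integrable_on {0..t}" if "t > 0" "nu < 1" for t
      using di[OF that] integrable_neg by fastforce
    show "(if nu = 1 then - D t else (1 / Gamma (1 - nu)) * integral {0..t} (\<lambda>s. (t - s) powr (-nu) * - D s))
        = - c * - d t" if "t > 0" for t
      using deq[OF that] by (auto simp: integral_neg)
  qed (rule t)
  then show ?thesis using 1 by simp
qed



theorem corollary5p5:
  fixes lam :: "nat \<Rightarrow> real" and nu :: real and p :: "nat \<Rightarrow> real \<Rightarrow> real"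
  assumes lam_pos: "\<And>n. n \<ge> 1 \<Longrightarrow> lam n > 0"
    and nu: "0 < nu" "nu \<le> 1"
    and cont: "\<And>n. n \<ge> 1 \<Longrightarrow> continuous_on {0..} (p n)"
    and diff: "\<And>n t. n \<ge> 1 \<Longrightarrow> t > 0 \<Longrightarrow> p n differentiable (at t)"
    and deriv_int: "\<And>n T. n \<ge> 1 \<Longrightarrow> T > 0 \<Longrightarrow> deriv (p n) absolutely_integrable_on {0..T}"
    and kernel_int: "\<And>n t. n \<ge> 1 \<Longrightarrow> t > 0 \<Longrightarrow> nu < 1 \<Longrightarrow>
          (\<lambda>s. (t - s) powr (- nu) * deriv (p n) s) absolutely_integrable_on {0..t}"
    and eq: "\<And>n t. n \<ge> 1 \<Longrightarrow> t > 0 \<Longrightarrow>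
          caputo nu (p n) t = - lam n * p n t + lam (n - 1) * p (n - 1) t"
    and p0: "\<And>t. t \<ge> 0 \<Longrightarrow> p 0 t = 0"
    and init1: "p 1 0 = 1"
    and init: "\<And>n. n \<ge> 2 \<Longrightarrow> p n 0 = 0"
  shows "\<forall>n\<ge>1. \<forall>t\<ge>0.
    summable (\<lambda>i. let k = i + (n - 1) in
        (-1) ^ k * (t powr nu) ^ k / Gamma (real k * nu + 1)
          * (\<Sum>kk\<in>Lambda_set k n. \<Prod>j=1..n. lam j ^ kk j)) \<and>
    p n t = (-1) ^ (n - 1) * (lam 1 / lam n) *
      (\<Sum>i. let k = i + (n - 1) in
        (-1) ^ k * (t powr nu) ^ k / Gamma (real k * nu + 1)
          * (\<Sum>kk\<in>Lambda_set k n. \<Prod>j=1..n. lam j ^ kk j))"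
proof -
  interpret fpb lam nu using lam_pos nu by unfold_locales auto
  have pq: "\<forall>t\<ge>0. p n t = qf lam nu n t" for n
  proof (induction n)
    case 0
    then show ?case using p0 qf_zero by simp
  next
    case (Suc m)
    define n where "n = Suc m"
    have n1: "n \<ge> 1" unfolding n_def by simp
    have IH: "\<And>t. t \<ge> 0 \<Longrightarrow> p (n - 1) t = qf lam nu (n - 1) t" using Suc.IH unfolding n_def by simp
    define d where "d t = p n t - qf lam nu n t" for t
    define D where "D s = deriv (p n) s - Dq lam nu n s" for s
    have "d t = 0" if t: "t \<ge> 0" for t
    proof (rule uniq[OF nu lam_pos[OF n1], where d=d and D=D])
      show "continuous_on {0..} d" unfolding d_def[abs_def]
        using cont[OF n1] qf_cont by (intro continuous_intros)
      show "d 0 = 0" unfolding d_def using qf_0[OF n1] init1 init[of n] n1 by auto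
      show "(d has_real_derivative D s) (at s)" if s: "s > 0" for s
      proof -
        have "(p n has_real_derivative deriv (p n) s) (at s)"
          using diff[OF n1 s] by (simp add: DERIV_deriv_iff_real_differentiable)
        then show ?thesis unfolding d_def[abs_def] D_def
          by (intro derivative_intros qf_deriv s)
      qed
      have int_split: "integral {0..t} (\<lambda>s. (t - s) powr (-nu) * D s)
          = integral {0..t} (\<lambda>s. (t - s) powr (-nu) * deriv (p n) s) - Gamma (1 - nu) * Tser lam nu (n-1) t"
        and int_ok: "(\<lambda>s. (t - s) powr (-nu) * D s) integrable_on {0..t}"
        if t: "t > 0" and nu1: "nu < 1" for t
      proof -
        have i1: "(\<lambda>s. (t - s) powr (-nu) * deriv (p n) s) integrable_on {0..t}"
          using kernel_int[OF n1 t nu1] absolutely_integrable_on_def by blast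
        have i2: "((\<lambda>s. (t - s) powr (-nu) * Dq lam nu n s) has_integral Gamma (1 - nu) * Tser lam nu (n-1) t) {0..t}"
          by (rule Dq_kernel_integral[OF n1 nu1 t])
        have e: "(\<lambda>s. (t - s) powr (-nu) * D s) =
            (\<lambda>s. (t - s) powr (-nu) * deriv (p n) s - (t - s) powr (-nu) * Dq lam nu n s)"
          unfolding D_def by (simp add: right_diff_distrib)
        have "((\<lambda>s. (t - s) powr (-nu) * D s) has_integral
            integral {0..t} (\<lambda>s. (t - s) powr (-nu) * deriv (p n) s) - Gamma (1 - nu) * Tser lam nu (n-1) t) {0..t}"
          unfolding e by (intro has_integral_diff i2 integrable_integral i1)
        then show "integral {0..t} (\<lambda>s. (t - s) powr (-nu) * D s)
          = integral {0..t} (\<lambda>s. (t - s) powr (-nu) * deriv (p n) s) - Gamma (1 - nu) * Tser lam nu (n-1) t"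
          and "(\<lambda>s. (t - s) powr (-nu) * D s) integrable_on {0..t}"
          by (auto simp: has_integral_iff)
      qed
      show "(\<lambda>s. (t - s) powr (-nu) * D s) integrable_on {0..t}" if "t > 0" "nu < 1" for t
        by (rule int_ok[OF that])
      show "(if nu = 1 then D t else (1 / Gamma (1 - nu)) * integral {0..t} (\<lambda>s. (t - s) powr (-nu) * D s))
          = - lam n * d t" if t: "t > 0" for t
      proof -
        have Tq: "Tser lam nu (n-1) t = - lam n * qf lam nu n t + lam (n-1) * qf lam nu (n-1) t"
          by (rule Tser_eq[OF n1])
        have ep: "caputo nu (p n) t = - lam n * p n t + lam (n - 1) * qf lam nu (n - 1) t"
          using eq[OF n1 t] IH[of t] t by simp
        show ?thesis
        proof (cases "nu = 1")
          case True
          have "D t = deriv (p n) t - Tser lam nu (n-1) t"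
            unfolding D_def using Dq_nu1[OF n1 True t] by simp
          moreover have "deriv (p n) t = caputo nu (p n) t" using True by (simp add: caputo_def)
          ultimately show ?thesis using True ep Tq unfolding d_def by (simp add: algebra_simps)
        next
          case False
          then have nu1: "nu < 1" using nu by simp
          have G: "Gamma (1 - nu) > 0" using nu1 by (intro Gamma_real_pos) simp
          have "(1 / Gamma (1 - nu)) * integral {0..t} (\<lambda>s. (t - s) powr (-nu) * D s)
              = caputo nu (p n) t - Tser lam nu (n-1) t"
            unfolding int_split[OF t nu1] caputo_def using False G by (simp add: field_simps)
          then show ?thesis using False ep Tq unfolding d_def by (simp add: algebra_simps)
        qed
      qed
    qed (use t in auto)
    then show ?case unfolding d_def n_def by simp
  qed
  show ?thesis
  proof (intro allI impI)
    fix n :: nat and t :: real assume n: "n \<ge> 1" and t: "t \<ge> 0"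
    define S where "S k = (-1) ^ k * (t powr nu) ^ k / Gamma (real k * nu + 1)
          * (\<Sum>kk\<in>Lambda_set k n. \<Prod>j=1..n. lam j ^ kk j)" for k
    define C where "C = (-1) ^ (n - 1) * (lam 1 / lam n)"
    have C0: "C \<noteq> 0" unfolding C_def using lam_pos[of 1] lam_pos[OF n] by simp
    have eS: "ecoef lam nu n k * (t powr nu) ^ k = C * S k" for k
      unfolding ecoef_def acoef_def S_def C_def csum_def using n by simp
    have "summable (\<lambda>k. C * S k)" using ecoef_summable[of n "t powr nu"] unfolding eS .
    then have sS: "summable S" using C0 by (simp add: summable_cmult_iff)
    have z: "S i = 0" if "i < n - 1" for i
      using csum_zero[OF n that, of lam] unfolding S_def csum_def by simp
    have sh: "(\<lambda>i. S (i + (n - 1))) sums suminf S"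
      using sums_zero_iff_shift[of "n - 1" S, OF z] sS by (simp add: summable_sums)
    have "p n t = qf lam nu n t" using pq t by simp
    also have "\<dots> = C * suminf S"
      unfolding qf_def Fser_def eS by (rule suminf_mult[OF sS])
    finally have pn: "p n t = C * (\<Sum>i. S (i + (n - 1)))" using sh by (simp add: sums_iff)
    show "summable (\<lambda>i. let k = i + (n - 1) in
        (-1) ^ k * (t powr nu) ^ k / Gamma (real k * nu + 1)
          * (\<Sum>kk\<in>Lambda_set k n. \<Prod>j=1..n. lam j ^ kk j)) \<and>
      p n t = (-1) ^ (n - 1) * (lam 1 / lam n) *
      (\<Sum>i. let k = i + (n - 1) in
        (-1) ^ k * (t powr nu) ^ k / Gamma (real k * nu + 1)
          * (\<Sum>kk\<in>Lambda_set k n. \<Prod>j=1..n. lam j ^ kk j))"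
      using sh pn unfolding Let_def S_def[symmetric] C_def[symmetric] by (auto simp: sums_iff)
  qed
qed

end
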